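(* In the setting of the context (with $g$ unimodal, symmetric about $0$ and logconcave): (i) $C(\theta)\ge C(2d_0)\ge 1-\frac{3\alpha}{2}$ for all $\theta\ge 2d_0$; (ii) $C(2d_0)\le 1-\frac{3\alpha}{2}+\frac{\alpha^2}{1+\alpha}$.
   Context: Let $g$ be a probability density on $\mathbb{R}$, unimodal and symmetric about $0$ (i.e. $g(z)=g(-z)$ and $g$ nonincreasing on $[0,\infty)$), and logconcave ($\log g$ concave on its support), with cdf $G$ and quantile function $G^{-1}(t)=\inf\{x:G(x)\ge t\}$. Let $X$ have density $g(x-\theta)$, $\theta\ge0$, and $P_\theta$ the corresponding probability. Fix $\alpha\in(0,1)$, and set $d_0=G^{-1}(\tfrac1{1+\alpha})$. The HPD credible interval (prior $1_{[0,\infty)}(\theta)$, credibility $1-\alpha$) is $[l(X),u(X)]$ with $l(x)=\{x-G^{-1}(\tfrac12+\tfrac{1-\alpha}2G(x))\}1_{(d_0,\infty)}(x)$, $u(x)=x-G^{-1}(\alpha G(x))$ for $x\le d_0$ and $u(x)=x+G^{-1}(\tfrac12+\tfrac{1-\alpha}2G(x))$ for $x>d_0$. The frequentist coverage is $C(\theta)=P_\theta(l(X)\le\theta\le u(X))$. *)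

theory Defs
  imports "HOL-Probability.Probability"
begin

definition is_density :: "(real \<Rightarrow> real) \<Rightarrow> bool" where
  "is_density g \<longleftrightarrow> g \<in> borel_measurable borel \<and> (\<forall>x. 0 \<le> g x)
     \<and> (\<integral>\<^sup>+ x. ennreal (g x) \<partial>lborel) = 1"

definition Gcdf :: "(real \<Rightarrow> real) \<Rightarrow> real \<Rightarrow> real" where
  "Gcdf g x = measure (density lborel (\<lambda>t. ennreal (g t))) {..x}"

definition Gquant :: "(real \<Rightarrow> real) \<Rightarrow> real \<Rightarrow> real" where
  "Gquant g t = Inf {x. t \<le> Gcdf g x}"

definition hpd_d0 :: "(real \<Rightarrow> real) \<Rightarrow> real \<Rightarrow> real" where
  "hpd_d0 g \<alpha> = Gquant g (1 / (1 + \<alpha>))"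

definition hpd_lower :: "(real \<Rightarrow> real) \<Rightarrow> real \<Rightarrow> real \<Rightarrow> real" where
  "hpd_lower g \<alpha> x =
     (if hpd_d0 g \<alpha> < x then x - Gquant g (1/2 + (1 - \<alpha>)/2 * Gcdf g x) else 0)"

definition hpd_upper :: "(real \<Rightarrow> real) \<Rightarrow> real \<Rightarrow> real \<Rightarrow> real" where
  "hpd_upper g \<alpha> x =
     (if x \<le> hpd_d0 g \<alpha> then x - Gquant g (\<alpha> * Gcdf g x)
      else x + Gquant g (1/2 + (1 - \<alpha>)/2 * Gcdf g x))"

definition coverage :: "(real \<Rightarrow> real) \<Rightarrow> real \<Rightarrow> real \<Rightarrow> real" where
  "coverage g \<alpha> \<theta> = measure (density lborel (\<lambda>x. ennreal (g (x - \<theta>))))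
      {x. hpd_lower g \<alpha> x \<le> \<theta> \<and> \<theta> \<le> hpd_upper g \<alpha> x}"

end

theory Submission
  imports Defs
begin

locale sdens =
  fixes g :: "real \<Rightarrow> real"
  assumes dens: "is_density g"
    and symm: "\<forall>z. g (- z) = g z"
    and unimodal: "\<forall>x y. 0 \<le> x \<longrightarrow> x \<le> y \<longrightarrow> g y \<le> g x"
    and logconcave: "concave_on {x. 0 < g x} (\<lambda>x. ln (g x))"
begin

lemma g_meas[measurable]: "g \<in> borel_measurable borel"
  using dens by (simp add: is_density_def)

lemma g_nonneg: "0 \<le> g x"
  using dens by (simp add: is_density_def)

lemma g_int: "(\<integral>\<^sup>+ x. ennreal (g x) \<partial>lborel) = 1"
  using dens by (simp add: is_density_def)

lemma sets_M[simp, measurable_cong]: "sets (density lborel (\<lambda>t. ennreal (g t))) = sets borel"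
  by simp

lemma real_dist: "real_distribution (density lborel (\<lambda>t. ennreal (g t)))"
proof -
  have "prob_space (density lborel (\<lambda>t. ennreal (g t)))"
    by (rule prob_spaceI) (simp add: emeasure_density g_int)
  then show ?thesis unfolding real_distribution_def real_distribution_axioms_def by simp
qed

sublocale D: cdf_distribution "density lborel (\<lambda>t. ennreal (g t))"
  unfolding cdf_distribution_def using real_dist .

abbreviation "M \<equiv> density lborel (\<lambda>t. ennreal (g t))"

lemma G_eq: "Gcdf g x = cdf M x"
  by (simp add: Gcdf_def cdf_def)

lemma Q_eq: "Gquant g t = Inf {x. t \<le> cdf M x}"
  by (simp add: Gquant_def G_eq)

lemma emeasure_M: "A \<in> sets borel \<Longrightarrow> emeasure M A = (\<integral>\<^sup>+ x. ennreal (g x) * indicator A x \<partial>lborel)"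
  by (simp add: emeasure_density)

lemma single_null: "emeasure M {x} = 0"
proof -
  have "{x} \<in> null_sets M"
    apply (subst null_sets_density_iff, simp)
    apply (rule conjI, simp)
    apply (rule eventually_mono[OF AE_lborel_singleton[of x]])
    by simp
  then show ?thesis by auto
qed

lemma single_null': "measure M {x} = 0"
  by (simp add: measure_def single_null)

lemma G_cont: "isCont (Gcdf g) x"
  unfolding G_eq[abs_def] by (simp add: D.isCont_cdf single_null')

lemma measure_lessThan: "measure M {..<x} = Gcdf g x"
proof -
  have "measure M {..x} = measure M ({..<x} \<union> {x})"
    by (metis ivl_disj_un_singleton(2))
  also have "\<dots> = measure M {..<x} + measure M {x}"
    by (rule D.finite_measure_Union) auto
  finally show ?thesis by (simp add: single_null' Gcdf_def)
qed

lemma nn_shift: "(f::real\<Rightarrow>ennreal) \<in> borel_measurable borel \<Longrightarrow> (\<integral>\<^sup>+ t. f (t + h) \<partial>lborel) = (\<integral>\<^sup>+ t. f t \<partial>lborel)"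
  using nn_integral_real_affine[of f 1 h] by (simp add: add.commute)

lemma nn_refl: "(f::real\<Rightarrow>ennreal) \<in> borel_measurable borel \<Longrightarrow> (\<integral>\<^sup>+ t. f (- t) \<partial>lborel) = (\<integral>\<^sup>+ t. f t \<partial>lborel)"
  using nn_integral_real_affine[of f "-1" 0] by simp

lemma G_symm: "Gcdf g (- x) = 1 - Gcdf g x"
proof -
  have "emeasure M {..-x} = (\<integral>\<^sup>+ t. ennreal (g t) * indicator {..-x} t \<partial>lborel)"
    by (simp add: emeasure_M)
  also have "\<dots> = (\<integral>\<^sup>+ t. ennreal (g (-t)) * indicator {..-x} (-t) \<partial>lborel)"
    by (rule nn_refl[symmetric]) simp
  also have "\<dots> = (\<integral>\<^sup>+ t. ennreal (g t) * indicator {x..} t \<partial>lborel)"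
    using symm by (intro nn_integral_cong) (auto simp: indicator_def)
  also have "\<dots> = emeasure M {x..}"
    by (simp add: emeasure_M)
  finally have "measure M {..-x} = measure M {x..}" by (simp add: measure_def)
  also have "\<dots> = 1 - measure M {..<x}"
  proof -
    have "{x..} = UNIV - {..<x}" by auto
    then show ?thesis using D.prob_compl[of "{..<x}"] by simp
  qed
  finally show ?thesis by (simp add: measure_lessThan Gcdf_def)
qed

lemma G_mono: "x \<le> y \<Longrightarrow> Gcdf g x \<le> Gcdf g y"
  by (simp add: G_eq D.cdf_nondecreasing)

lemma G_nonneg: "0 \<le> Gcdf g x"
  by (simp add: G_eq D.cdf_nonneg)

lemma G_le1: "Gcdf g x \<le> 1"
  by (simp add: G_eq D.cdf_bounded_prob)

lemma G0: "Gcdf g 0 = 1/2"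
  using G_symm[of 0] by simp

lemma Q_galois: "0 < t \<Longrightarrow> t < 1 \<Longrightarrow> Gquant g t \<le> x \<longleftrightarrow> t \<le> Gcdf g x"
  using D.pseudoinverse[of t x] by (simp add: Q_eq G_eq)

lemma Q_lt: "0 < t \<Longrightarrow> t < 1 \<Longrightarrow> x < Gquant g t \<longleftrightarrow> Gcdf g x < t"
  using Q_galois[of t x] by auto

lemma Q_mono: assumes "0 < s" "s \<le> t" "t < 1" shows "Gquant g s \<le> Gquant g t"
proof -
  have t0: "0 < t" "s < 1" using assms by auto
  have "t \<le> Gcdf g (Gquant g t)" using Q_galois[OF t0(1) assms(3), of "Gquant g t"] by simp
  then have "s \<le> Gcdf g (Gquant g t)" using assms(2) by linarith
  then show ?thesis using Q_galois[OF assms(1) t0(2), of "Gquant g t"] by simp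
qed

lemma G_Q: assumes "0 < t" "t < 1" shows "Gcdf g (Gquant g t) = t"
proof (rule antisym)
  let ?q = "Gquant g t"
  have "(cdf M \<longlongrightarrow> measure M {..<?q}) (at_left ?q)" by (rule D.cdf_at_left)
  moreover have "eventually (\<lambda>x. cdf M x \<le> t) (at_left ?q)"
  proof -
    have "eventually (\<lambda>x. x \<in> {?q - 1<..<?q}) (at_left ?q)"
      by (rule eventually_at_left_real) simp
    then show ?thesis
    proof (rule eventually_mono)
      fix x assume "x \<in> {?q - 1<..<?q}"
      then have "Gcdf g x < t" using Q_lt[OF assms, of x] by simp
      then show "cdf M x \<le> t" by (simp add: G_eq)
    qed
  qed
  ultimately have "measure M {..<?q} \<le> t"
    by (intro tendsto_upperbound) auto
  then show "Gcdf g ?q \<le> t" by (simp add: measure_lessThan)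
  show "t \<le> Gcdf g ?q" using Q_galois[OF assms, of ?q] by simp
qed

lemma g_between: assumes "a \<le> y" "y \<le> b" shows "min (g a) (g b) \<le> g y"
proof -
  have gabs: "g z = g \<bar>z\<bar>" for z using symm by (simp add: abs_if)
  have "\<bar>y\<bar> \<le> \<bar>a\<bar> \<or> \<bar>y\<bar> \<le> \<bar>b\<bar>" using assms by auto
  then show ?thesis
  proof
    assume "\<bar>y\<bar> \<le> \<bar>a\<bar>"
    then have "g \<bar>a\<bar> \<le> g \<bar>y\<bar>" using unimodal by auto
    then show ?thesis by (simp add: gabs[of a] gabs[of y])
  next
    assume "\<bar>y\<bar> \<le> \<bar>b\<bar>"
    then have "g \<bar>b\<bar> \<le> g \<bar>y\<bar>" using unimodal by auto
    then show ?thesis by (simp add: gabs[of b] gabs[of y])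
  qed
qed

lemma L1: assumes "t \<le> s" "0 \<le> h" shows "g t * g (s + h) \<le> g (t + h) * g s"
proof (cases "g t = 0 \<or> g (s + h) = 0 \<or> h = 0")
  case True
  then show ?thesis using g_nonneg[of "t+h"] g_nonneg[of s] by (auto simp: mult.commute)
next
  case False
  then have pt: "0 < g t" "0 < g (s+h)" "0 < h" using g_nonneg[of t] g_nonneg[of "s+h"] assms by auto
  have mp: "0 < min (g t) (g (s + h))" using pt by simp
  have "min (g t) (g (s + h)) \<le> g (t + h)" using assms by (intro g_between) auto
  then have p1: "0 < g (t + h)" using mp by linarith
  have "min (g t) (g (s + h)) \<le> g s" using assms by (intro g_between) auto
  then have p2: "0 < g s" using mp by linarith
  define l where "l = (s - t) / (s + h - t)"
  have d: "0 < s + h - t" using assms pt by auto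
  have l0: "0 \<le> l" "l \<le> 1" using assms d by (auto simp: l_def field_simps)
  have lk: "l * (s + h - t) = s - t" using d by (simp add: l_def)
  have "(1 - l) * (s+h) + l * t = (s + h) - l * (s + h - t)" by (simp add: algebra_simps)
  then have e1: "(1 - l) *\<^sub>R (s+h) + l *\<^sub>R t = t + h" using lk by simp
  have "(1 - l) * t + l * (s+h) = t + l * (s + h - t)" by (simp add: algebra_simps)
  then have e2: "(1 - l) *\<^sub>R t + l *\<^sub>R (s+h) = s" using lk by simp
  have c1: "(1 - l) * ln (g (s+h)) + l * ln (g t) \<le> ln (g (t+h))"
    using concave_onD[OF logconcave, of l "s+h" t] l0 pt e1 by simp
  have c2: "(1 - l) * ln (g t) + l * ln (g (s+h)) \<le> ln (g s)"
    using concave_onD[OF logconcave, of l t "s+h"] l0 pt e2 by simp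
  have "ln (g t * g (s + h)) \<le> ln (g (t + h) * g s)"
    using c1 c2 pt p1 p2 by (simp add: ln_mult algebra_simps)
  then show ?thesis using pt p1 p2 by simp
qed

lemma emeasure_eq: "emeasure M A = ennreal (measure M A)"
  by (simp add: D.emeasure_eq_measure)

lemma L2: assumes "a \<le> s" "0 \<le> h" shows "Gcdf g a * g (s + h) \<le> Gcdf g (a + h) * g s"
proof -
  have "ennreal (Gcdf g a) * ennreal (g (s + h)) = emeasure M {..a} * g (s + h)"
    by (simp add: Gcdf_def emeasure_eq)
  also have "\<dots> = (\<integral>\<^sup>+ t. ennreal (g t) * indicator {..a} t * ennreal (g (s + h)) \<partial>lborel)"
    by (simp add: emeasure_M nn_integral_multc)
  also have "\<dots> \<le> (\<integral>\<^sup>+ t. ennreal (g (t + h)) * indicator {..a+h} (t + h) * ennreal (g s) \<partial>lborel)"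
  proof (intro nn_integral_mono)
    fix t
    show "ennreal (g t) * indicator {..a} t * ennreal (g (s + h))
          \<le> ennreal (g (t + h)) * indicator {..a + h} (t + h) * ennreal (g s)"
    proof (cases "t \<le> a")
      case True
      then have "g t * g (s + h) \<le> g (t + h) * g s" using L1[of t s h] assms by auto
      then show ?thesis using True g_nonneg
        by (simp add: ennreal_mult'[symmetric] ennreal_mult[symmetric] mult.commute mult.left_commute)
    qed auto
  qed
  also have "\<dots> = (\<integral>\<^sup>+ t. ennreal (g t) * indicator {..a+h} t * ennreal (g s) \<partial>lborel)"
    by (rule nn_shift[where f="\<lambda>t. ennreal (g t) * indicator {..a+h} t * ennreal (g s)"]) simp
  also have "\<dots> = emeasure M {..a+h} * g s"
    by (simp add: emeasure_M nn_integral_multc)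
  also have "\<dots> = ennreal (Gcdf g (a + h)) * ennreal (g s)"
    by (simp add: Gcdf_def emeasure_eq)
  finally show ?thesis using g_nonneg G_nonneg
    by (simp add: ennreal_mult[symmetric])
qed

lemma L3: assumes "a \<le> c" "0 \<le> h" shows "Gcdf g a * Gcdf g (c + h) \<le> Gcdf g (a + h) * Gcdf g c"
proof (cases "a = c")
  case True then show ?thesis by (simp add: mult.commute)
next
  case False
  then have ac: "a < c" using assms by auto
  have "ennreal (Gcdf g a) * emeasure M {a+h<..c+h}
     = (\<integral>\<^sup>+ s. ennreal (Gcdf g a) * (ennreal (g (s + h)) * indicator {a+h<..c+h} (s + h)) \<partial>lborel)"
  proof -
    have "(\<integral>\<^sup>+ s. ennreal (Gcdf g a) * (ennreal (g (s + h)) * indicator {a+h<..c+h} (s + h)) \<partial>lborel)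
        = ennreal (Gcdf g a) * (\<integral>\<^sup>+ s. ennreal (g (s + h)) * indicator {a+h<..c+h} (s + h) \<partial>lborel)"
      by (rule nn_integral_cmult) simp
    also have "(\<integral>\<^sup>+ s. ennreal (g (s + h)) * indicator {a+h<..c+h} (s + h) \<partial>lborel)
        = (\<integral>\<^sup>+ s. ennreal (g s) * indicator {a+h<..c+h} s \<partial>lborel)"
      by (rule nn_shift[where f="\<lambda>s. ennreal (g s) * indicator {a+h<..c+h} s"]) simp
    also have "\<dots> = emeasure M {a+h<..c+h}" by (simp add: emeasure_M)
    finally show ?thesis by simp
  qed
  also have "\<dots> \<le> (\<integral>\<^sup>+ s. ennreal (Gcdf g (a+h)) * (ennreal (g s) * indicator {a<..c} s) \<partial>lborel)"
  proof (intro nn_integral_mono)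
    fix s
    show "ennreal (Gcdf g a) * (ennreal (g (s + h)) * indicator {a + h<..c + h} (s + h))
        \<le> ennreal (Gcdf g (a + h)) * (ennreal (g s) * indicator {a<..c} s)"
    proof (cases "a < s \<and> s \<le> c")
      case True
      then have "Gcdf g a * g (s + h) \<le> Gcdf g (a + h) * g s" using L2[of a s h] assms by auto
      then show ?thesis using True g_nonneg G_nonneg
        by (simp add: ennreal_mult[symmetric])
    qed auto
  qed
  also have "\<dots> = ennreal (Gcdf g (a+h)) * emeasure M {a<..c}"
    by (simp add: emeasure_M nn_integral_cmult)
  finally have "Gcdf g a * measure M {a+h<..c+h} \<le> Gcdf g (a+h) * measure M {a<..c}"
    using G_nonneg by (simp add: emeasure_eq ennreal_mult[symmetric])
  moreover have "measure M {a+h<..c+h} = Gcdf g (c+h) - Gcdf g (a+h)"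
    using D.cdf_diff_eq[of "a+h" "c+h"] ac by (simp add: G_eq)
  moreover have "measure M {a<..c} = Gcdf g c - Gcdf g a"
    using D.cdf_diff_eq[of "a" "c"] ac by (simp add: G_eq)
  ultimately show ?thesis by (simp add: algebra_simps)
qed

end

locale sdens2 = sdens +
  fixes \<alpha> :: real
  assumes a0: "0 < \<alpha>" and a1: "\<alpha> < 1"
begin

abbreviation "d0 \<equiv> hpd_d0 g \<alpha>"

lemma t0: "0 < 1 / (1 + \<alpha>)" "1 / (1 + \<alpha>) < 1" "1/2 < 1 / (1 + \<alpha>)"
  using a0 a1 by (auto simp: field_simps)

lemma Gd0: "Gcdf g d0 = 1 / (1 + \<alpha>)"
  unfolding hpd_d0_def using G_Q t0 by simp

lemma d0_pos: "0 < d0"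
  unfolding hpd_d0_def using Q_lt[OF t0(1,2), of 0] G0 t0(3) by simp

lemma Gmd0: "Gcdf g (- d0) = \<alpha> / (1 + \<alpha>)"
  using G_symm[of d0] Gd0 a0 by (simp add: field_simps)

lemma Gmd0': "Gcdf g (- d0) = \<alpha> * Gcdf g d0"
  using Gmd0 Gd0 by simp

lemma N2: "Gcdf g (- 3 * d0) \<le> \<alpha> ^ 2 / (1 + \<alpha>)"
proof -
  have p1: "- 3 * d0 \<le> - d0" "0 \<le> 2 * d0" using d0_pos by linarith+
  have e1: "- d0 + 2 * d0 = d0" "- 3 * d0 + 2 * d0 = - d0" by linarith+
  have A: "Gcdf g (- 3 * d0) * Gcdf g d0 \<le> Gcdf g (- d0) * Gcdf g (- d0)"
    using L3[OF p1] unfolding e1 .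
  have B: "Gcdf g (- d0) * Gcdf g (- d0) = (\<alpha> * \<alpha> * Gcdf g d0) * Gcdf g d0"
    unfolding Gmd0' by (simp only: mult_ac)
  have gp: "0 < Gcdf g d0" unfolding Gd0 by (rule t0(1))
  have "Gcdf g (- 3 * d0) \<le> \<alpha> * \<alpha> * Gcdf g d0"
    by (rule mult_right_le_imp_le[OF A[unfolded B] gp])
  also have "\<alpha> * \<alpha> * Gcdf g d0 = \<alpha> ^ 2 / (1 + \<alpha>)" unfolding Gd0 by (simp add: power2_eq_square)
  finally show ?thesis .
qed

lemma N1: assumes "z \<le> - d0" shows "Gcdf g z \<le> \<alpha> * Gcdf g (z + 2 * d0)"
proof -
  have p1: "z \<le> - d0" "0 \<le> 2 * d0" using d0_pos assms by linarith+
  have e1: "- d0 + 2 * d0 = d0" by linarith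
  have A: "Gcdf g z * Gcdf g d0 \<le> Gcdf g (z + 2 * d0) * Gcdf g (- d0)"
    using L3[OF p1] unfolding e1 .
  have B: "Gcdf g (z + 2 * d0) * Gcdf g (- d0) = (\<alpha> * Gcdf g (z + 2 * d0)) * Gcdf g d0"
    unfolding Gmd0' by (simp only: mult_ac)
  have gp: "0 < Gcdf g d0" unfolding Gd0 by (rule t0(1))
  show ?thesis
    by (rule mult_right_le_imp_le[OF A[unfolded B] gp])
qed

lemma strict: assumes "z < - d0" "0 < Gcdf g z" shows "Gcdf g z < \<alpha> * Gcdf g (z + 2 * d0)"
proof (rule ccontr)
  assume "\<not> ?thesis"
  then have eqz: "Gcdf g z = \<alpha> * Gcdf g (z + 2 * d0)" using N1[of z] assms by linarith
  have "0 < \<alpha> * Gcdf g (z + 2 * d0)" using eqz assms(2) by linarith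
  then have pz2: "0 < Gcdf g (z + 2 * d0)" using a0 by (simp add: zero_less_mult_iff)
  have dz: "0 < - d0 - z" using assms by linarith
  obtain n :: nat where n: "d0 / (- d0 - z) < real n" using reals_Archimedean2 by blast
  have "0 < d0 / (- d0 - z)" using d0_pos dz by simp
  then have nr: "0 < real n" using n by linarith
  then have npos: "0 < n" by simp
  define e where "e = d0 / real n"
  have epos: "0 < e" using nr d0_pos by (simp add: e_def)
  have "d0 < real n * (- d0 - z)" using n dz by (simp add: divide_less_eq)
  then have ele: "e \<le> - d0 - z" using nr unfolding e_def by (simp add: divide_le_eq mult.commute)
  have ne: "real n * e = d0" using nr by (simp add: e_def)
  define t where "t = - d0 - e"
  have zt: "z \<le> t" "t < - d0" using ele epos unfolding t_def by linarith+
  have te: "t + 2 * d0 = d0 - e" "t + e = - d0" "t + 2 * d0 + e = d0" unfolding t_def by linarith+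
  have de: "d0 - e + e = d0" by simp
  have Gtpos: "0 < Gcdf g t" using G_mono[OF zt(1)] assms(2) by linarith
  have Gt: "Gcdf g t = \<alpha> * Gcdf g (d0 - e)"
  proof (rule antisym)
    show "Gcdf g t \<le> \<alpha> * Gcdf g (d0 - e)" using N1[of t] zt unfolding te by linarith
    have p: "z \<le> t" "0 \<le> 2 * d0" using zt d0_pos by linarith+
    have "Gcdf g z * Gcdf g (t + 2 * d0) \<le> Gcdf g (z + 2 * d0) * Gcdf g t"
      by (rule L3[OF p])
    then have "Gcdf g (z + 2 * d0) * (\<alpha> * Gcdf g (t + 2 * d0)) \<le> Gcdf g (z + 2 * d0) * Gcdf g t"
      unfolding eqz by (simp only: mult_ac)
    then have "\<alpha> * Gcdf g (t + 2 * d0) \<le> Gcdf g t" using pz2 by (rule mult_left_le_imp_le)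
    then show "\<alpha> * Gcdf g (d0 - e) \<le> Gcdf g t" unfolding te .
  qed
  have "0 < \<alpha> * Gcdf g (d0 - e)" using Gt Gtpos by linarith
  then have Gde: "0 < Gcdf g (d0 - e)" using a0 by (simp add: zero_less_mult_iff)
  define \<rho> where "\<rho> = Gcdf g d0 / Gcdf g (d0 - e)"
  have \<rho>e: "\<rho> * Gcdf g (d0 - e) = Gcdf g d0" using Gde by (simp add: \<rho>_def)
  have step: "Gcdf g (u + e) = \<rho> * Gcdf g u" if u: "t \<le> u" "u \<le> t + 2 * d0" for u
  proof (rule antisym)
    have p: "t \<le> u" "0 \<le> e" using u epos by linarith+
    have "Gcdf g t * Gcdf g (u + e) \<le> Gcdf g (t + e) * Gcdf g u"
      by (rule L3[OF p])
    then have "\<alpha> * (Gcdf g (d0 - e) * Gcdf g (u + e)) \<le> \<alpha> * (Gcdf g d0 * Gcdf g u)"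
      unfolding Gt te Gmd0' by (simp only: mult_ac)
    then have "Gcdf g (d0 - e) * Gcdf g (u + e) \<le> Gcdf g d0 * Gcdf g u"
      using a0 by (rule mult_left_le_imp_le)
    then have "Gcdf g (d0 - e) * Gcdf g (u + e) \<le> Gcdf g (d0 - e) * (\<rho> * Gcdf g u)"
      unfolding \<rho>e[symmetric] by (simp only: mult_ac)
    then show "Gcdf g (u + e) \<le> \<rho> * Gcdf g u" using Gde by (rule mult_left_le_imp_le)
    have p2: "u \<le> t + 2 * d0" "0 \<le> e" using u epos by linarith+
    have "Gcdf g u * Gcdf g (t + 2 * d0 + e) \<le> Gcdf g (u + e) * Gcdf g (t + 2 * d0)"
      by (rule L3[OF p2])
    then have "Gcdf g (d0 - e) * (\<rho> * Gcdf g u) \<le> Gcdf g (d0 - e) * Gcdf g (u + e)"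
      unfolding te(1) de \<rho>e[symmetric] by (simp only: mult_ac)
    then show "\<rho> * Gcdf g u \<le> Gcdf g (u + e)" using Gde by (rule mult_left_le_imp_le)
  qed
  have ind: "k \<le> 2 * n \<Longrightarrow> Gcdf g (- d0 + real k * e) = \<rho> ^ k * Gcdf g (- d0)" for k
  proof (induction k)
    case 0 then show ?case by simp
  next
    case (Suc k)
    have "real (Suc k) \<le> 2 * real n" using Suc.prems by linarith
    then have "real (Suc k) * e \<le> (2 * real n) * e" using epos by (intro mult_right_mono) auto
    then have "real (Suc k) * e \<le> 2 * d0" using ne by (simp add: mult.assoc)
    moreover have "0 \<le> real k * e" using epos by simp
    moreover have "real (Suc k) * e = real k * e + e" by (simp add: algebra_simps)
    ultimately have "t \<le> - d0 + real k * e" "- d0 + real k * e \<le> t + 2 * d0"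
      using epos unfolding t_def by linarith+
    then have "Gcdf g (- d0 + real k * e + e) = \<rho> * Gcdf g (- d0 + real k * e)" by (rule step)
    then show ?case using Suc by (simp add: algebra_simps)
  qed
  have h1: "Gcdf g 0 = \<rho> ^ n * Gcdf g (- d0)" using ind[of n] ne by simp
  have h2: "Gcdf g d0 = \<rho> ^ (2 * n) * Gcdf g (- d0)"
  proof -
    have eq: "- d0 + real (2 * n) * e = d0" using ne by (simp add: mult.assoc)
    have F: "Gcdf g (- d0 + real (2 * n) * e) = \<rho> ^ (2 * n) * Gcdf g (- d0)"
      by (rule ind) simp
    show ?thesis using F unfolding eq .
  qed
  have pw: "\<rho> ^ (2 * n) = \<rho> ^ n * \<rho> ^ n" by (simp add: mult_2 power_add)
  have "Gcdf g 0 * Gcdf g 0 = Gcdf g d0 * Gcdf g (- d0)"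
    unfolding h1 h2 pw by (simp only: mult_ac)
  then have e4: "(1/2) * (1/2) = (1 / (1 + \<alpha>)) * (\<alpha> / (1 + \<alpha>))" by (simp only: G0 Gd0 Gmd0)
  have "(1 + \<alpha>) * (1 + \<alpha>) = 4 * \<alpha>"
  proof -
    have "1 + \<alpha> \<noteq> 0" using a0 by simp
    with e4 show ?thesis by (simp add: field_simps)
  qed
  then have "(1 - \<alpha>) * (1 - \<alpha>) = 0" by (simp add: algebra_simps)
  then show False using a1 by simp
qed

end




context sdens
begin

lemma G_meas[measurable]: "Gcdf g \<in> borel_measurable borel"
  by (rule borel_measurable_mono) (auto simp: mono_def G_mono)

definition QF where "QF t = (if t \<in> {0<..<1} then Gquant g t else 0)"

lemma QF_meas[measurable]: "QF \<in> borel_measurable borel"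
proof -
  have "mono_on {0<..<1} (Gquant g)" by (auto simp: mono_on_def intro: Q_mono)
  then have "Gquant g \<in> borel_measurable (restrict_space borel {0<..<1})"
    by (rule borel_measurable_mono_on_fnc)
  moreover have "{0<..<1::real} \<inter> space borel \<in> sets borel" by simp
  ultimately have "(\<lambda>x. if x \<in> {0<..<1::real} then Gquant g x else 0) \<in> borel_measurable borel"
    using measurable_restrict_space_iff[of "{0<..<1::real}" borel 0 borel "Gquant g"] by simp
  then show ?thesis unfolding QF_def[abs_def] .
qed

lemma N0_null: "measure M {z. Gcdf g z = 0} = 0"
proof (rule ccontr)
  let ?N = "{z. Gcdf g z = 0}"
  assume "measure M ?N \<noteq> 0"
  then have m: "0 < measure M ?N" using measure_nonneg[of M ?N] by linarith
  define t where "t = min (measure M ?N / 2) (1/2)"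
  have t12: "t \<le> 1/2" unfolding t_def by (rule min.cobounded2)
  have "0 < t" unfolding t_def min_less_iff_conj using m by (intro conjI) linarith+
  then have t: "0 < t" "t < 1" using t12 by linarith+
  have "?N \<subseteq> {..<Gquant g t}"
  proof
    fix z assume "z \<in> ?N"
    then have "Gcdf g z < t" using t by simp
    then show "z \<in> {..<Gquant g t}" using Q_lt[OF t, of z] by simp
  qed
  then have "measure M ?N \<le> measure M {..<Gquant g t}"
    by (intro D.finite_measure_mono) auto
  also have "\<dots> = t" using G_Q[OF t] by (simp add: measure_lessThan)
  finally have "measure M ?N \<le> t" .
  moreover have "t \<le> measure M ?N / 2" unfolding t_def by (rule min.cobounded1)
  ultimately show False using m by linarith
qed

end

lemma alg_idL: "(a::real) * r = 1 - r \<Longrightarrow> 1/2 + (1-a)/2 * (1 - (a - 1 + r)) - (1 - r) - (1 - 3 * a / 2) = a^2/2"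
  by algebra

lemma alg_id: "0 < (a::real) \<Longrightarrow> 1/2 + (1-a)/2 * (1 - a^2 / (1 + a)) - a / (1 + a) - (1 - 3 * a / 2) = a^2/2"
proof -
  assume a: "0 < a"
  define r where "r = 1 / (1 + a)"
  have n: "1 + a \<noteq> 0" using a by simp
  have e1: "a^2 / (1 + a) = a - 1 + r" using n unfolding r_def by (simp add: field_simps power2_eq_square)
  have e2: "a / (1 + a) = 1 - r" using n unfolding r_def by (simp add: field_simps)
  have e3: "a * r = 1 - r" using n unfolding r_def by (simp add: field_simps)
  show ?thesis unfolding e1 e2 using alg_idL[OF e3] .
qed

context sdens2
begin

definition tau where "tau x = 1/2 + (1-\<alpha>)/2 * Gcdf g x"

lemma tau_b: "0 < tau x" "tau x < 1" "tau x \<le> 1 - \<alpha>/2"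
proof -
  have "0 \<le> (1-\<alpha>)/2 * Gcdf g x" using a1 G_nonneg by simp
  moreover have "(1-\<alpha>)/2 * Gcdf g x \<le> (1-\<alpha>)/2" using a1 G_le1[of x] by (simp add: mult_left_le)
  ultimately show "0 < tau x" "tau x < 1" "tau x \<le> 1 - \<alpha>/2" using a0 by (auto simp: tau_def)
qed

lemma aG_lt1: "\<alpha> * Gcdf g x < 1"
proof -
  have "\<alpha> * Gcdf g x \<le> \<alpha>" using G_le1[of x] a0 by (intro mult_left_le) auto
  then show ?thesis using a1 by linarith
qed

lemma tau_mono: "x \<le> y \<Longrightarrow> tau x \<le> tau y"
  using G_mono[of x y] a1 by (simp add: tau_def mult_left_mono)

lemma hpd_lower_eq: "hpd_lower g \<alpha> = (\<lambda>x. if d0 < x then x - QF (tau x) else 0)"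
  using tau_b by (auto simp: fun_eq_iff hpd_lower_def QF_def tau_def)

lemma hpd_upper_eq: "hpd_upper g \<alpha> = (\<lambda>x. if x \<le> d0 then x - (if 0 < Gcdf g x then QF (\<alpha> * Gcdf g x) else Gquant g 0) else x + QF (tau x))"
proof (rule ext)
  fix x
  show "hpd_upper g \<alpha> x = (if x \<le> d0 then x - (if 0 < Gcdf g x then QF (\<alpha> * Gcdf g x) else Gquant g 0) else x + QF (tau x))"
  proof (cases "0 < Gcdf g x")
    case True then show ?thesis using tau_b aG_lt1[of x] a0 by (auto simp: hpd_upper_def QF_def tau_def)
  next
    case False then have "Gcdf g x = 0" using G_nonneg[of x] by linarith
    then show ?thesis using tau_b[of x] by (auto simp: hpd_upper_def QF_def tau_def)
  qed
qed

lemma hpd_lower_meas[measurable]: "hpd_lower g \<alpha> \<in> borel_measurable borel"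
  unfolding hpd_lower_eq tau_def by measurable

lemma hpd_upper_meas[measurable]: "hpd_upper g \<alpha> \<in> borel_measurable borel"
  unfolding hpd_upper_eq tau_def by measurable

definition Tz where "Tz \<theta> = {z. hpd_lower g \<alpha> (z + \<theta>) \<le> \<theta> \<and> \<theta> \<le> hpd_upper g \<alpha> (z + \<theta>)}"

lemma Tz_meas[measurable]: "Tz \<theta> \<in> sets borel"
  unfolding Tz_def by measurable

lemma cov_eq: "coverage g \<alpha> \<theta> = measure M (Tz \<theta>)"
proof -
  let ?T = "{x. hpd_lower g \<alpha> x \<le> \<theta> \<and> \<theta> \<le> hpd_upper g \<alpha> x}"
  have T[measurable]: "?T \<in> sets borel" by measurable
  have "emeasure (density lborel (\<lambda>x. ennreal (g (x - \<theta>)))) ?T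
      = (\<integral>\<^sup>+ x. ennreal (g (x - \<theta>)) * indicator ?T x \<partial>lborel)"
    by (intro emeasure_density) auto
  also have "\<dots> = (\<integral>\<^sup>+ z. ennreal (g (z + \<theta> - \<theta>)) * indicator ?T (z + \<theta>) \<partial>lborel)"
    by (rule nn_shift[symmetric, where f="\<lambda>x. ennreal (g (x - \<theta>)) * indicator ?T x"]) measurable
  also have "\<dots> = (\<integral>\<^sup>+ z. ennreal (g z) * indicator (Tz \<theta>) z \<partial>lborel)"
    by (intro nn_integral_cong) (simp add: Tz_def indicator_def)
  also have "\<dots> = emeasure M (Tz \<theta>)" by (simp add: emeasure_M)
  finally show ?thesis unfolding coverage_def by (simp add: measure_def)
qed

definition S where "S \<theta> = Tz \<theta> \<inter> {z. d0 < z + \<theta>}"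

lemma S_meas[measurable]: "S \<theta> \<in> sets borel"
  unfolding S_def by measurable

lemma S_char: "z \<in> S \<theta> \<longleftrightarrow> d0 < z + \<theta> \<and> \<bar>z\<bar> \<le> Gquant g (tau (z + \<theta>))"
  by (auto simp: S_def Tz_def hpd_lower_def hpd_upper_def tau_def abs_le_iff)

lemma S_mono: assumes "\<theta> \<le> \<theta>'" shows "S \<theta> \<subseteq> S \<theta>'"
proof
  fix z assume "z \<in> S \<theta>"
  then have z: "d0 < z + \<theta>" "\<bar>z\<bar> \<le> Gquant g (tau (z + \<theta>))" by (auto simp: S_char)
  have "Gquant g (tau (z + \<theta>)) \<le> Gquant g (tau (z + \<theta>'))"
    using assms by (intro Q_mono tau_b tau_mono) auto
  then show "z \<in> S \<theta>'" using z assms by (auto simp: S_char)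
qed

lemma Tz_sub: "Tz (2 * d0) \<subseteq> S (2 * d0) \<union> {z. Gcdf g z = 0} \<union> {- d0}"
proof
  fix z assume zT: "z \<in> Tz (2 * d0)"
  show "z \<in> S (2 * d0) \<union> {z. Gcdf g z = 0} \<union> {- d0}"
  proof (cases "d0 < z + 2 * d0")
    case True then show ?thesis using zT by (auto simp: S_def)
  next
    case False
    then have zle: "z \<le> - d0" by simp
    have q: "Gquant g (\<alpha> * Gcdf g (z + 2 * d0)) \<le> z"
      using zT False by (auto simp: Tz_def hpd_upper_def)
    show ?thesis
    proof (rule ccontr)
      assume "\<not> ?thesis"
      then have z: "z < - d0" "0 < Gcdf g z" using zle G_nonneg[of z] by (auto simp: order_le_less)
      have "Gcdf g z \<le> Gcdf g (z + 2 * d0)" using d0_pos by (intro G_mono) simp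
      then have p: "0 < \<alpha> * Gcdf g (z + 2 * d0)" "\<alpha> * Gcdf g (z + 2 * d0) < 1"
        using z a0 aG_lt1[of "z + 2 * d0"] by (auto intro: mult_pos_pos)
      have "\<alpha> * Gcdf g (z + 2 * d0) \<le> Gcdf g z" using Q_galois[OF p] q by simp
      then show False using strict[OF z] by simp
    qed
  qed
qed

lemma measure_S: "measure M (Tz (2 * d0)) = measure M (S (2 * d0))"
proof (rule antisym)
  have "measure M (Tz (2 * d0)) \<le> measure M (S (2 * d0) \<union> {z. Gcdf g z = 0} \<union> {- d0})"
    using Tz_sub by (intro D.finite_measure_mono) auto
  also have "\<dots> \<le> measure M (S (2 * d0) \<union> {z. Gcdf g z = 0}) + measure M {- d0}"
    by (intro measure_subadditive) (auto intro: D.emeasure_finite)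
  also have "\<dots> \<le> measure M (S (2 * d0)) + measure M {z. Gcdf g z = 0} + measure M {- d0}"
    by (intro add_right_mono measure_subadditive) (auto intro: D.emeasure_finite)
  finally show "measure M (Tz (2 * d0)) \<le> measure M (S (2 * d0))"
    by (simp add: N0_null single_null')
  show "measure M (S (2 * d0)) \<le> measure M (Tz (2 * d0))"
    by (intro D.finite_measure_mono) (auto simp: S_def)
qed

lemma part1: assumes "2 * d0 \<le> \<theta>" shows "coverage g \<alpha> (2 * d0) \<le> coverage g \<alpha> \<theta>"
proof -
  have "coverage g \<alpha> (2 * d0) = measure M (S (2 * d0))" by (simp add: cov_eq measure_S)
  also have "\<dots> \<le> measure M (S \<theta>)" using S_mono[OF assms] by (intro D.finite_measure_mono) auto
  also have "\<dots> \<le> measure M (Tz \<theta>)" by (intro D.finite_measure_mono) (auto simp: S_def)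
  finally show ?thesis by (simp add: cov_eq)
qed

lemma Q_ge_d0: assumes "1 / (1 + \<alpha>) \<le> t" "t < 1" shows "d0 \<le> Gquant g t"
  unfolding hpd_d0_def using assms t0 by (intro Q_mono) auto

lemma tau_ge: "d0 < x \<Longrightarrow> 1 / (1 + \<alpha>) \<le> tau x"
proof -
  assume "d0 < x"
  then have "1 / (1 + \<alpha>) \<le> Gcdf g x" using G_mono[of d0 x] Gd0 by simp
  then have "(1-\<alpha>)/2 * (1 / (1 + \<alpha>)) \<le> (1-\<alpha>)/2 * Gcdf g x" using a1 by (intro mult_left_mono) auto
  moreover have "1/2 + (1-\<alpha>)/2 * (1 / (1 + \<alpha>)) = 1 / (1 + \<alpha>)" using a0 by (simp add: field_simps)
  ultimately show ?thesis unfolding tau_def by linarith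
qed

lemma part_upper: "coverage g \<alpha> (2 * d0) \<le> 1 - 3 * \<alpha> / 2 + \<alpha>\<^sup>2 / (1 + \<alpha>)"
proof -
  let ?c = "Gquant g (1 - \<alpha>/2)"
  have c: "0 < 1 - \<alpha>/2" "1 - \<alpha>/2 < 1" using a0 a1 by auto
  have sub: "S (2 * d0) \<subseteq> {- d0<..?c}"
  proof
    fix z assume "z \<in> S (2 * d0)"
    then have z: "d0 < z + 2 * d0" "\<bar>z\<bar> \<le> Gquant g (tau (z + 2 * d0))" by (auto simp: S_char)
    have "Gquant g (tau (z + 2 * d0)) \<le> ?c" using tau_b by (intro Q_mono c) auto
    then show "z \<in> {- d0<..?c}" using z by auto
  qed
  have "1 / (1 + \<alpha>) \<le> 1 - \<alpha>/2" using tau_ge[of "d0 + 1"] tau_b(3)[of "d0 + 1"] d0_pos by linarith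
  then have "d0 \<le> ?c" using c by (intro Q_ge_d0) auto
  then have "- d0 < ?c" using d0_pos by linarith
  then have "measure M {- d0<..?c} = Gcdf g ?c - Gcdf g (- d0)"
    using D.cdf_diff_eq[of "- d0" ?c] by (simp add: G_eq)
  also have "\<dots> = 1 - \<alpha>/2 - \<alpha> / (1 + \<alpha>)" using G_Q[OF c] Gmd0 by simp
  also have "\<dots> = 1 - 3 * \<alpha> / 2 + \<alpha>\<^sup>2 / (1 + \<alpha>)" using a0 by (simp add: field_simps power2_eq_square)
  finally have "measure M (S (2 * d0)) \<le> 1 - 3 * \<alpha> / 2 + \<alpha>\<^sup>2 / (1 + \<alpha>)"
    using D.finite_measure_mono[OF sub] by simp
  then show ?thesis by (simp add: cov_eq measure_S)
qed

lemma part_lower: "1 - 3 * \<alpha> / 2 \<le> coverage g \<alpha> (2 * d0)"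
proof -
  define \<gamma> where "\<gamma> = 1/2 + (1-\<alpha>)/2 * Gcdf g (3 * d0)"
  have g\<gamma>: "\<gamma> = tau (3 * d0)" by (simp add: tau_def \<gamma>_def)
  have gb: "0 < \<gamma>" "\<gamma> < 1" "1 / (1 + \<alpha>) \<le> \<gamma>" using tau_b tau_ge[of "3 * d0"] d0_pos g\<gamma> by auto
  let ?q = "Gquant g \<gamma>"
  have qd: "d0 \<le> ?q" using Q_ge_d0 gb by auto
  have sub: "{- d0<..<?q} \<subseteq> S (2 * d0)"
  proof
    fix z assume z: "z \<in> {- d0<..<?q}"
    have x: "d0 < z + 2 * d0" using z by auto
    have qx: "d0 \<le> Gquant g (tau (z + 2 * d0))" using Q_ge_d0 tau_ge[OF x] tau_b by auto
    have "\<bar>z\<bar> \<le> Gquant g (tau (z + 2 * d0))"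
    proof (cases "z \<le> d0")
      case True then show ?thesis using z qx by auto
    next
      case False
      then have "\<gamma> \<le> tau (z + 2 * d0)" unfolding g\<gamma> by (intro tau_mono) auto
      then have "?q \<le> Gquant g (tau (z + 2 * d0))" using gb tau_b by (intro Q_mono) auto
      then show ?thesis using z False by auto
    qed
    then show "z \<in> S (2 * d0)" using x by (simp add: S_char)
  qed
  have "measure M {- d0<..<?q} = measure M ({..<?q} - {..- d0})"
    by (rule arg_cong[where f="measure M"]) auto
  also have "\<dots> = measure M {..<?q} - measure M {..- d0}"
    using qd d0_pos by (intro D.finite_measure_Diff) auto
  also have "\<dots> = \<gamma> - \<alpha> / (1 + \<alpha>)"
    using G_Q[OF gb(1,2)] Gmd0 by (simp add: measure_lessThan Gcdf_def[symmetric])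
  finally have m: "measure M {- d0<..<?q} = \<gamma> - \<alpha> / (1 + \<alpha>)" .
  have G3: "1 - \<alpha>^2 / (1 + \<alpha>) \<le> Gcdf g (3 * d0)" using G_symm[of "3 * d0"] N2 by simp
  have "(1-\<alpha>)/2 * (1 - \<alpha>^2 / (1 + \<alpha>)) \<le> (1-\<alpha>)/2 * Gcdf g (3 * d0)"
    using G3 a1 by (intro mult_left_mono) auto
  then have "1/2 + (1-\<alpha>)/2 * (1 - \<alpha>^2 / (1 + \<alpha>)) - \<alpha> / (1 + \<alpha>) \<le> \<gamma> - \<alpha> / (1 + \<alpha>)"
    by (simp add: \<gamma>_def)
  moreover have "1 - 3 * \<alpha> / 2 \<le> 1/2 + (1-\<alpha>)/2 * (1 - \<alpha>^2 / (1 + \<alpha>)) - \<alpha> / (1 + \<alpha>)"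
  proof -
    have "1/2 + (1-\<alpha>)/2 * (1 - \<alpha>^2 / (1 + \<alpha>)) - \<alpha> / (1 + \<alpha>) - (1 - 3 * \<alpha> / 2)
        = \<alpha>^2 / 2"
      by (rule alg_id[OF a0])
    moreover have "0 \<le> \<alpha>^2 / 2" by simp
    ultimately show ?thesis by linarith
  qed
  ultimately have "1 - 3 * \<alpha> / 2 \<le> measure M {- d0<..<?q}" using m by simp
  also have "\<dots> \<le> measure M (S (2 * d0))" using sub by (intro D.finite_measure_mono) auto
  finally show ?thesis by (simp add: cov_eq measure_S)
qed

end


theorem lemma7:
  fixes g :: "real \<Rightarrow> real" and \<alpha> :: real
  assumes dens: "is_density g"
    and symm: "\<forall>z. g (- z) = g z"
    and unimodal: "\<forall>x y. 0 \<le> x \<longrightarrow> x \<le> y \<longrightarrow> g y \<le> g x"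
    and logconcave: "concave_on {x. 0 < g x} (\<lambda>x. ln (g x))"
    and alpha: "0 < \<alpha>" "\<alpha> < 1"
  shows "(\<forall>\<theta>\<ge>2 * hpd_d0 g \<alpha>. coverage g \<alpha> \<theta> \<ge> coverage g \<alpha> (2 * hpd_d0 g \<alpha>))
       \<and> coverage g \<alpha> (2 * hpd_d0 g \<alpha>) \<ge> 1 - 3 * \<alpha> / 2
       \<and> coverage g \<alpha> (2 * hpd_d0 g \<alpha>) \<le> 1 - 3 * \<alpha> / 2 + \<alpha>\<^sup>2 / (1 + \<alpha>)"
proof -
  interpret sdens2 g \<alpha>
    by (rule sdens2.intro[OF sdens.intro[OF dens symm unimodal logconcave] sdens2_axioms.intro[OF alpha]])
  have A: "\<forall>\<theta>\<ge>2 * hpd_d0 g \<alpha>. coverage g \<alpha> \<theta> \<ge> coverage g \<alpha> (2 * hpd_d0 g \<alpha>)"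
  proof (intro allI impI)
    fix \<theta> :: real assume "2 * hpd_d0 g \<alpha> \<le> \<theta>"
    then show "coverage g \<alpha> (2 * hpd_d0 g \<alpha>) \<le> coverage g \<alpha> \<theta>" by (rule part1)
  qed
  show ?thesis using A part_lower part_upper by (intro conjI)
qed

end
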